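(* Let $A,B \in M_n(\mathbb{R}_+)$ be two triangularizable matrices. Then $A$ and $B$ are simultaneously triangularizable if and only if the union $G_A \cup G_B$ of their digraphs has no directed multi-vertex cycles.
   Context: Max algebra: $\mathbb{R}_+$ the nonnegative reals with $a\oplus b=\max\{a,b\}$ and ordinary multiplication. For $A,B\in M_n(\mathbb{R}_+)$, $(AB)_{ij}=\max_k a_{ik}b_{kj}$ and $(A\oplus B)_{ij}=\max\{a_{ij},b_{ij}\}$. $GL_n(\mathbb{R}_+)$ is the set of matrices invertible under this product (the generalized permutation matrices). $A$ is triangularizable if $P^{-1}AP$ is upper triangular for some $P\in GL_n(\mathbb{R}_+)$; $A,B$ are simultaneously triangularizable if there is one $P\in GL_n(\mathbb{R}_+)$ with both $P^{-1}AP$ and $P^{-1}BP$ upper triangular. The digraph $G_A$ has vertices $\{1,\dots,n\}$ and an edge $i\to j$ iff $a_{ij}>0$; $G_A\cup G_B$ has vertices $\{1,\dots,n\}$ and the union of the edge sets (it equals $G_{A\oplus B}$). A directed multi-vertex cycle is a directed simple cycle through at least two distinct vertices. *)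

theory Defs
  imports Complex_Main
begin

text \<open>n x n matrices over the max algebra R_+ are represented as functions
  nat => nat => real; only the entries with indices < n are relevant.\<close>

definition nonneg_mat :: "nat \<Rightarrow> (nat \<Rightarrow> nat \<Rightarrow> real) \<Rightarrow> bool" where
  "nonneg_mat n A \<longleftrightarrow> (\<forall>i<n. \<forall>j<n. 0 \<le> A i j)"

definition max_mult :: "nat \<Rightarrow> (nat \<Rightarrow> nat \<Rightarrow> real) \<Rightarrow> (nat \<Rightarrow> nat \<Rightarrow> real) \<Rightarrow> (nat \<Rightarrow> nat \<Rightarrow> real)" where
  "max_mult n A B = (\<lambda>i j. Max ((\<lambda>k. A i k * B k j) ` {..<n}))"

definition id_mat :: "nat \<Rightarrow> nat \<Rightarrow> real" where
  "id_mat i j = (if i = j then 1 else 0)"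

definition mat_eq :: "nat \<Rightarrow> (nat \<Rightarrow> nat \<Rightarrow> real) \<Rightarrow> (nat \<Rightarrow> nat \<Rightarrow> real) \<Rightarrow> bool" where
  "mat_eq n A B \<longleftrightarrow> (\<forall>i<n. \<forall>j<n. A i j = B i j)"

definition max_inverse_pair :: "nat \<Rightarrow> (nat \<Rightarrow> nat \<Rightarrow> real) \<Rightarrow> (nat \<Rightarrow> nat \<Rightarrow> real) \<Rightarrow> bool" where
  "max_inverse_pair n P Q \<longleftrightarrow> nonneg_mat n P \<and> nonneg_mat n Q \<and>
     mat_eq n (max_mult n P Q) id_mat \<and> mat_eq n (max_mult n Q P) id_mat"

definition upper_triangular :: "nat \<Rightarrow> (nat \<Rightarrow> nat \<Rightarrow> real) \<Rightarrow> bool" where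
  "upper_triangular n M \<longleftrightarrow> (\<forall>i<n. \<forall>j<n. j < i \<longrightarrow> M i j = 0)"

definition triangularizable :: "nat \<Rightarrow> (nat \<Rightarrow> nat \<Rightarrow> real) \<Rightarrow> bool" where
  "triangularizable n A \<longleftrightarrow> (\<exists>P Q. max_inverse_pair n P Q \<and>
     upper_triangular n (max_mult n Q (max_mult n A P)))"

definition simult_triangularizable :: "nat \<Rightarrow> (nat \<Rightarrow> nat \<Rightarrow> real) \<Rightarrow> (nat \<Rightarrow> nat \<Rightarrow> real) \<Rightarrow> bool" where
  "simult_triangularizable n A B \<longleftrightarrow> (\<exists>P Q. max_inverse_pair n P Q \<and>
     upper_triangular n (max_mult n Q (max_mult n A P)) \<and>
     upper_triangular n (max_mult n Q (max_mult n B P)))"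

definition union_digraph :: "nat \<Rightarrow> (nat \<Rightarrow> nat \<Rightarrow> real) \<Rightarrow> (nat \<Rightarrow> nat \<Rightarrow> real) \<Rightarrow> nat \<Rightarrow> nat \<Rightarrow> bool" where
  "union_digraph n A B i j \<longleftrightarrow> i < n \<and> j < n \<and> (0 < A i j \<or> 0 < B i j)"

definition has_multivertex_cycle :: "nat \<Rightarrow> (nat \<Rightarrow> nat \<Rightarrow> bool) \<Rightarrow> bool" where
  "has_multivertex_cycle n E \<longleftrightarrow> (\<exists>vs. 2 \<le> length vs \<and> distinct vs \<and> set vs \<subseteq> {..<n} \<and>
     (\<forall>i<length vs. E (vs ! i) (vs ! ((i + 1) mod length vs))))"

end

theory Submission
  imports Defs
begin

lemma mm_ge:
  assumes "k < n"
  shows "A i k * B k j \<le> max_mult n A B i j"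
  unfolding max_mult_def by (rule Max_ge) (use assms in auto)

lemma Max_single:
  fixes h :: "nat \<Rightarrow> real"
  assumes "kz < n" "\<forall>k<n. k \<noteq> kz \<longrightarrow> h k = 0" "0 \<le> h kz"
  shows "Max (h ` {..<n}) = h kz"
  by (rule Max_eqI) (use assms in auto)

lemma walk_cycle:
  assumes fin: "finite S" and ne: "S \<noteq> {}" and sub: "S \<subseteq> {..<n}"
    and succ: "\<forall>v\<in>S. \<exists>u\<in>S. E v u \<and> v \<noteq> u"
  shows "has_multivertex_cycle n E"
proof -
  obtain v0 where v0: "v0 \<in> S" using ne by auto
  define nxt where "nxt v = (SOME u. u \<in> S \<and> E v u \<and> v \<noteq> u)" for v
  have nxt: "nxt v \<in> S \<and> E v (nxt v) \<and> v \<noteq> nxt v" if "v \<in> S" for v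
    unfolding nxt_def by (rule someI_ex) (use succ that in auto)
  define w where "w k = (nxt ^^ k) v0" for k
  have wS: "w k \<in> S" for k
    by (induction k) (auto simp: w_def v0 nxt)
  have wsuc: "w (Suc k) = nxt (w k)" for k by (simp add: w_def)
  have wE: "E (w k) (w (Suc k)) \<and> w k \<noteq> w (Suc k)" for k
    using nxt[OF wS[of k]] wsuc by simp
  have "\<not> inj_on w {..card S}"
  proof
    assume "inj_on w {..card S}"
    then have "card (w ` {..card S}) = Suc (card S)" by (simp add: card_image)
    moreover have "card (w ` {..card S}) \<le> card S"
      by (rule card_mono[OF fin]) (use wS in auto)
    ultimately show False by simp
  qed
  then obtain a b where ab: "a \<noteq> b" "w a = w b" unfolding inj_on_def by auto
  have ex: "\<exists>j. \<exists>i<j. w i = w j"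
  proof (cases "a < b")
    case True then show ?thesis using ab by auto
  next
    case False then have "b < a" using ab by auto
    then show ?thesis using ab by metis
  qed
  define j0 where "j0 = (LEAST j. \<exists>i<j. w i = w j)"
  have "\<exists>i<j0. w i = w j0" unfolding j0_def by (rule LeastI_ex[OF ex])
  then obtain i0 where i0: "i0 < j0" "w i0 = w j0" by auto
  have minj: "w x \<noteq> w y" if "x < y" "y < j0" for x y
  proof
    assume "w x = w y"
    then have "\<exists>i<y. w i = w y" using that by auto
    then have "j0 \<le> y" unfolding j0_def by (rule Least_le)
    then show False using that by simp
  qed
  define vs where "vs = map w [i0..<j0]"
  have L: "length vs = j0 - i0" by (simp add: vs_def)
  have nth: "vs ! k = w (i0 + k)" if "k < j0 - i0" for k
    using that by (simp add: vs_def)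
  have dist: "distinct vs"
  proof -
    have "inj_on w {i0..<j0}"
      unfolding inj_on_def
      by (metis atLeastLessThan_iff linorder_neqE_nat minj)
    then show ?thesis by (simp add: vs_def distinct_map)
  qed
  have len2: "2 \<le> length vs"
  proof (rule ccontr)
    assume "\<not> 2 \<le> length vs"
    then have "j0 = Suc i0" using L i0 by simp
    then show False using wE[of i0] i0 by simp
  qed
  have setvs: "set vs \<subseteq> {..<n}" using wS sub by (auto simp: vs_def)
  have edges: "\<forall>k<length vs. E (vs ! k) (vs ! ((k + 1) mod length vs))"
  proof (intro allI impI)
    fix k assume k: "k < length vs"
    show "E (vs ! k) (vs ! ((k + 1) mod length vs))"
    proof (cases "k + 1 < length vs")
      case True
      then show ?thesis using wE[of "i0 + k"] nth[of k] nth[of "k+1"] L by simp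
    next
      case False
      then have "k + 1 = length vs" using k by simp
      then have "(k + 1) mod length vs = 0" by simp
      moreover have "vs ! 0 = w i0" using nth[of 0] i0 by simp
      moreover have "Suc (i0 + k) = j0" using \<open>k + 1 = length vs\<close> L i0 by simp
      ultimately show ?thesis using wE[of "i0 + k"] nth[of k] k L i0 by simp
    qed
  qed
  show ?thesis unfolding has_multivertex_cycle_def
    using len2 dist setvs edges by blast
qed

lemma topo:
  assumes nc: "\<not> has_multivertex_cycle n E"
  shows "finite S \<Longrightarrow> S \<subseteq> {..<n} \<Longrightarrow> \<exists>ls. distinct ls \<and> set ls = S \<and>
     (\<forall>a<length ls. \<forall>b<length ls. E (ls!a) (ls!b) \<and> ls!a \<noteq> ls!b \<longrightarrow> a \<le> b)"
proof (induction S rule: finite_psubset_induct)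
  case (psubset S)
  show ?case
  proof (cases "S = {}")
    case True then show ?thesis by (intro exI[of _ "[]"]) auto
  next
    case False
    have "\<not> (\<forall>v\<in>S. \<exists>u\<in>S. E v u \<and> v \<noteq> u)"
      using walk_cycle[OF psubset.hyps(1) False psubset.prems, where E=E] nc by blast
    then obtain s where s: "s \<in> S" "\<forall>u\<in>S. \<not> (E s u \<and> s \<noteq> u)"
      by blast
    have "S - {s} \<subset> S" using s by auto
    from psubset.IH[OF this] psubset.prems obtain xs where
      xs: "distinct xs" "set xs = S - {s}"
        "\<forall>a<length xs. \<forall>b<length xs. E (xs!a) (xs!b) \<and> xs!a \<noteq> xs!b \<longrightarrow> a \<le> b"
      by auto
    show ?thesis
    proof (intro exI[of _ "xs @ [s]"] conjI allI impI)
      show "distinct (xs @ [s])" using xs by auto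
      show "set (xs @ [s]) = S" using xs s by auto
    next
      fix a b assume ab: "a < length (xs @ [s])" "b < length (xs @ [s])"
        and e: "E ((xs @ [s]) ! a) ((xs @ [s]) ! b) \<and> (xs @ [s]) ! a \<noteq> (xs @ [s]) ! b"
      show "a \<le> b"
      proof (cases "a < length xs")
        case a: True
        show ?thesis
        proof (cases "b < length xs")
          case True then show ?thesis using xs(3) a e by (simp add: nth_append)
        next
          case False then show ?thesis using a ab by simp
        qed
      next
        case False
        then have "a = length xs" using ab by simp
        then have "(xs @ [s]) ! a = s" by simp
        moreover have "(xs @ [s]) ! b \<in> set (xs @ [s])" using ab(2) by (rule nth_mem)
        moreover have "set (xs @ [s]) = S" using xs s by auto
        ultimately show ?thesis using e s(2) by fastforce
      qed
    qed
  qed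
qed

lemma nec:
  assumes "nonneg_mat n A" "nonneg_mat n B" "simult_triangularizable n A B"
  shows "\<not> has_multivertex_cycle n (union_digraph n A B)"
proof
  assume cyc: "has_multivertex_cycle n (union_digraph n A B)"
  obtain P Q where PQ: "max_inverse_pair n P Q"
    and tA: "upper_triangular n (max_mult n Q (max_mult n A P))"
    and tB: "upper_triangular n (max_mult n Q (max_mult n B P))"
    using assms(3) unfolding simult_triangularizable_def by blast
  have Pn: "nonneg_mat n P" and Qn: "nonneg_mat n Q"
    and PQI: "mat_eq n (max_mult n P Q) id_mat" using PQ unfolding max_inverse_pair_def by auto
  have exm: "\<exists>m<n. 0 < P v m \<and> 0 < Q m v" if v: "v < n" for v
  proof -
    have "max_mult n P Q v v = 1" using PQI v unfolding mat_eq_def id_mat_def by auto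
    then have "Max ((\<lambda>k. P v k * Q k v) ` {..<n}) = 1" by (simp add: max_mult_def)
    moreover have "Max ((\<lambda>k. P v k * Q k v) ` {..<n}) \<in> (\<lambda>k. P v k * Q k v) ` {..<n}"
      by (rule Max_in) (use v in auto)
    ultimately obtain k where k: "k < n" "P v k * Q k v = 1" by force
    have "0 \<le> P v k" "0 \<le> Q k v" using Pn Qn k v unfolding nonneg_mat_def by auto
    then have "0 < P v k" "0 < Q k v" using k(2)
      by (metis less_eq_real_def mult_eq_0_iff zero_neq_one)+
    then show ?thesis using k by auto
  qed
  define pos where "pos v = (SOME m. m < n \<and> 0 < P v m \<and> 0 < Q m v)" for v
  have pos: "pos v < n \<and> 0 < P v (pos v) \<and> 0 < Q (pos v) v" if "v < n" for v
    unfolding pos_def by (rule someI_ex) (use exm[OF that] in auto)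
  have posinj: "k = l" if "k < n" "l < n" "pos k = pos l" for k l
  proof -
    have "P k (pos k) * Q (pos k) l \<le> max_mult n P Q k l"
      by (rule mm_ge) (use pos that in auto)
    moreover have "0 < P k (pos k) * Q (pos k) l"
      using pos[OF that(1)] pos[OF that(2)] that(3) by (metis mult_pos_pos)
    ultimately have "max_mult n P Q k l \<noteq> 0" by simp
    then show ?thesis using PQI that unfolding mat_eq_def id_mat_def by (auto split: if_splits)
  qed
  have posle: "pos k \<le> pos l"
    if M: "nonneg_mat n M" "upper_triangular n (max_mult n Q (max_mult n M P))"
      and kl: "k < n" "l < n" "0 < M k l" for M k l
  proof (rule ccontr)
    assume "\<not> pos k \<le> pos l"
    then have lt: "pos l < pos k" by simp
    have "M k l * P l (pos l) \<le> max_mult n M P k (pos l)"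
      by (rule mm_ge) (use kl in auto)
    then have "Q (pos k) k * (M k l * P l (pos l)) \<le> Q (pos k) k * max_mult n M P k (pos l)"
      using pos[OF kl(1)] by (intro mult_left_mono) auto
    also have "\<dots> \<le> max_mult n Q (max_mult n M P) (pos k) (pos l)"
      by (rule mm_ge) (use kl in auto)
    finally have "0 < max_mult n Q (max_mult n M P) (pos k) (pos l)"
      using pos[OF kl(1)] pos[OF kl(2)] kl(3)
      by (smt (verit) mult_pos_pos)
    then show False using M(2) lt pos kl unfolding upper_triangular_def by force
  qed
  have poslt: "pos u < pos v" if "union_digraph n A B u v" "u \<noteq> v" for u v
  proof -
    have "pos u \<le> pos v" using that posle[OF assms(1) tA] posle[OF assms(2) tB]
      unfolding union_digraph_def by auto
    moreover have "pos u \<noteq> pos v" using posinj that unfolding union_digraph_def by auto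
    ultimately show ?thesis by simp
  qed
  obtain vs where vs: "2 \<le> length vs" "distinct vs" "set vs \<subseteq> {..<n}"
    "\<forall>i<length vs. union_digraph n A B (vs ! i) (vs ! ((i + 1) mod length vs))"
    using cyc unfolding has_multivertex_cycle_def by blast
  define L where "L = length vs"
  have step: "pos (vs ! i) < pos (vs ! ((i + 1) mod L))" if "i < L" for i
  proof -
    have "i \<noteq> (i + 1) mod L"
    proof (cases "i + 1 < L")
      case True then show ?thesis by simp
    next
      case False then have "i + 1 = L" using that by simp
      then show ?thesis using vs(1) unfolding L_def by simp
    qed
    then have "vs ! i \<noteq> vs ! ((i + 1) mod L)"
    proof -
      have "0 < L" using vs(1) unfolding L_def by linarith
      then have "(i+1) mod L < L" by (rule mod_less_divisor)
      then show ?thesis using nth_eq_iff_index_eq[OF vs(2), of i "(i+1) mod L"] that \<open>i \<noteq> (i + 1) mod L\<close>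
        unfolding L_def by blast
    qed
    then show ?thesis using poslt vs(4) that unfolding L_def by auto
  qed
  have mono: "i < L \<Longrightarrow> pos (vs ! 0) \<le> pos (vs ! i)" for i
  proof (induction i)
    case 0 then show ?case by simp
  next
    case (Suc i)
    then have "pos (vs ! i) < pos (vs ! Suc i)" using step[of i] by simp
    then show ?case using Suc by simp
  qed
  have "L - 1 < L" using vs(1) L_def by linarith
  moreover have "L - 1 + 1 = L" using vs(1) L_def by linarith
  then have "(L - 1 + 1) mod L = 0" by simp
  ultimately have "pos (vs ! (L - 1)) < pos (vs ! 0)" using step[of "L - 1"] by simp
  then show False using mono[of "L - 1"] \<open>L - 1 < L\<close> by simp
qed

lemma suff:
  assumes "nonneg_mat n A" "nonneg_mat n B"
    and nc: "\<not> has_multivertex_cycle n (union_digraph n A B)"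
  shows "simult_triangularizable n A B"
proof -
  obtain ls where ls: "distinct ls" "set ls = {..<n}"
    "\<forall>a<length ls. \<forall>b<length ls. union_digraph n A B (ls!a) (ls!b) \<and> ls!a \<noteq> ls!b \<longrightarrow> a \<le> b"
    using topo[OF nc, of "{..<n}"] by auto
  have len: "length ls = n" using ls distinct_card by fastforce
  define g where "g j = ls ! j" for j
  have gn: "g j < n" if "j < n" for j using ls len that unfolding g_def
    by (metis lessThan_iff nth_mem)
  have ginj: "g i = g j \<longleftrightarrow> i = j" if "i < n" "j < n" for i j
    using ls(1) len that unfolding g_def by (simp add: nth_eq_iff_index_eq)
  have gsurj: "\<exists>k<n. g k = v" if "v < n" for v
    using ls(2) len that unfolding g_def by (metis in_set_conv_nth lessThan_iff)
  define P where "P l j = (if l = g j then 1 else 0::real)" for l j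
  define Q where "Q i k = (if k = g i then 1 else 0::real)" for i k
  have conj: "max_mult n Q (max_mult n M P) i j = M (g i) (g j)"
    if M: "nonneg_mat n M" and ij: "i < n" "j < n" for M i j
  proof -
    have MP: "max_mult n M P k j = M k (g j)" if k: "k < n" for k
      unfolding max_mult_def
      apply (subst Max_single[where kz="g j"])
      using M k gn ij by (auto simp: P_def nonneg_mat_def)
    show ?thesis
      unfolding max_mult_def[of n Q]
      apply (subst Max_single[where kz="g i"])
      using M gn ij MP by (auto simp: Q_def nonneg_mat_def)
  qed
  have ut: "upper_triangular n (max_mult n Q (max_mult n M P))"
    if M: "nonneg_mat n M"
      "\<forall>u<n. \<forall>v<n. 0 < M u v \<longrightarrow> union_digraph n A B u v" for M
    unfolding upper_triangular_def
  proof (intro allI impI)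
    fix i j assume ij: "i < n" "j < n" "j < i"
    have "\<not> 0 < M (g i) (g j)"
    proof
      assume "0 < M (g i) (g j)"
      then have "union_digraph n A B (ls ! i) (ls ! j)" using M(2) gn ij unfolding g_def by auto
      moreover have "ls ! i \<noteq> ls ! j" using ginj ij unfolding g_def by auto
      ultimately have "i \<le> j" using ls(3) len ij by auto
      then show False using ij by simp
    qed
    moreover have "0 \<le> M (g i) (g j)" using M(1) gn ij unfolding nonneg_mat_def by simp
    ultimately have "M (g i) (g j) = 0"
      by (metis less_eq_real_def)
    then show "max_mult n Q (max_mult n M P) i j = 0" using conj[OF M(1) ij(1,2)] by simp
  qed
  have inv: "max_inverse_pair n P Q"
    unfolding max_inverse_pair_def
  proof (intro conjI)
    show "nonneg_mat n P" "nonneg_mat n Q" by (auto simp: nonneg_mat_def P_def Q_def)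
    show "mat_eq n (max_mult n P Q) id_mat"
      unfolding mat_eq_def
    proof (intro allI impI)
      fix i j assume ij: "i < n" "j < n"
      obtain kz where kz: "kz < n" "g kz = i" using gsurj ij by auto
      show "max_mult n P Q i j = id_mat i j"
        unfolding max_mult_def
        apply (subst Max_single[where kz=kz])
        using kz ij ginj by (auto simp: P_def Q_def id_mat_def)
    qed
    show "mat_eq n (max_mult n Q P) id_mat"
      unfolding mat_eq_def
    proof (intro allI impI)
      fix i j assume ij: "i < n" "j < n"
      show "max_mult n Q P i j = id_mat i j"
        unfolding max_mult_def
        apply (subst Max_single[where kz="g i"])
        using ij ginj gn by (auto simp: P_def Q_def id_mat_def)
    qed
  qed
  have uA: "\<forall>u<n. \<forall>v<n. 0 < A u v \<longrightarrow> union_digraph n A B u v"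
    and uB: "\<forall>u<n. \<forall>v<n. 0 < B u v \<longrightarrow> union_digraph n A B u v"
    by (auto simp: union_digraph_def)
  show ?thesis unfolding simult_triangularizable_def
    using inv ut[OF assms(1) uA] ut[OF assms(2) uB] by auto
qed

theorem theorem3p3:
  fixes n :: nat and A B :: "nat \<Rightarrow> nat \<Rightarrow> real"
  assumes "nonneg_mat n A" and "nonneg_mat n B"
    and "triangularizable n A" and "triangularizable n B"
  shows "simult_triangularizable n A B \<longleftrightarrow>
         \<not> has_multivertex_cycle n (union_digraph n A B)"
  using nec[OF assms(1,2)] suff[OF assms(1,2)] by blast

end
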